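(* Let $\mathcal{E}\subseteq \mathrm{CL}(\mathbb{R})$. The following conditions are equivalent: (1) there exists $\mathcal{G}\subseteq C(\mathbb{R},\mathbb{R})$ such that $\mathcal{E}\in \mathcal{K}_\mathcal{G}$; (2) $\mathcal{E}$ is hereditary.
   Context: $\mathrm{CL}(\mathbb{R})$ denotes the family of all closed subsets of $\mathbb{R}$ and $C(\mathbb{R},\mathbb{R})$ the set of all continuous functions $\mathbb{R}\to\mathbb{R}$. For $\mathcal{G}\subseteq C(\mathbb{R},\mathbb{R})$ let $R_\mathcal{G}=\{(f,E)\in C(\mathbb{R},\mathbb{R})\times\mathrm{CL}(\mathbb{R}):(\exists g\in\mathcal{G})\, f\restriction E=g\restriction E\}$. For $\mathcal{F}\subseteq C(\mathbb{R},\mathbb{R})$ and $\mathcal{E}\subseteq\mathrm{CL}(\mathbb{R})$ put $E_\mathcal{G}(\mathcal{F})=\{E\in\mathrm{CL}(\mathbb{R}):(\forall f\in\mathcal{F})\,(f,E)\in R_\mathcal{G}\}$ and $F_\mathcal{G}(\mathcal{E})=\{f\in C(\mathbb{R},\mathbb{R}):(\forall E\in\mathcal{E})\,(f,E)\in R_\mathcal{G}\}$. Let $\mathcal{K}_\mathcal{G}=\{E_\mathcal{G}(\mathcal{F}):\mathcal{F}\subseteq C(\mathbb{R},\mathbb{R})\}$ (equivalently, the families $\mathcal{E}$ with $E_\mathcal{G}(F_\mathcal{G}(\mathcal{E}))=\mathcal{E}$). A family $\mathcal{E}\subseteq\mathrm{CL}(\mathbb{R})$ is hereditary if for all $D,E\in\mathrm{CL}(\mathbb{R})$,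 $D\subseteq E\in\mathcal{E}$ implies $D\in\mathcal{E}$. *)

theory Defs
  imports "HOL-Analysis.Analysis"
begin

definition CRR :: "(real \<Rightarrow> real) set" where
  "CRR = {f. continuous_on UNIV f}"

definition CLR :: "real set set" where
  "CLR = {E. closed E}"

definition R_G :: "(real \<Rightarrow> real) set \<Rightarrow> ((real \<Rightarrow> real) \<times> real set) set" where
  "R_G G = {(f, E). f \<in> CRR \<and> E \<in> CLR \<and> (\<exists>g\<in>G. \<forall>x\<in>E. f x = g x)}"

definition E_G :: "(real \<Rightarrow> real) set \<Rightarrow> (real \<Rightarrow> real) set \<Rightarrow> real set set" where
  "E_G G F = {E \<in> CLR. \<forall>f\<in>F. (f, E) \<in> R_G G}"

definition F_G :: "(real \<Rightarrow> real) set \<Rightarrow> real set set \<Rightarrow> (real \<Rightarrow> real) set" where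
  "F_G G \<E> = {f \<in> CRR. \<forall>E\<in>\<E>. (f, E) \<in> R_G G}"

definition K_G :: "(real \<Rightarrow> real) set \<Rightarrow> real set set set" where
  "K_G G = {E_G G F | F. F \<subseteq> CRR}"

definition hereditary :: "real set set \<Rightarrow> bool" where
  "hereditary \<E> \<longleftrightarrow> (\<forall>D E. D \<in> CLR \<and> E \<in> CLR \<and> D \<subseteq> E \<and> E \<in> \<E> \<longrightarrow> D \<in> \<E>)"

end

theory Submission
  imports Defs
begin

lemma zero_set_fun:
  assumes "closed (E::real set)"
  shows "\<exists>g::real\<Rightarrow>real. continuous_on UNIV g \<and> {x. g x = 0} = E"
proof (cases "E = {}")
  case True
  show ?thesis
    apply (rule exI[of _ "\<lambda>x::real. 1::real"])
    using True by simp
next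
  case False
  have "continuous_on UNIV (\<lambda>x::real. infdist x E)"
    by (rule continuous_on_infdist[OF continuous_on_id])
  moreover have "{x. infdist x E = 0} = E"
    using in_closed_iff_infdist_zero[OF assms False] by auto
  ultimately show ?thesis
    apply (intro exI[of _ "\<lambda>x::real. infdist x E"])
    by simp
qed

lemma zero_set_closed:
  assumes "continuous_on UNIV (g::real \<Rightarrow> real)"
  shows "closed {x. g x = 0}"
  by (rule closed_Collect_eq[OF assms continuous_on_const])

theorem proposition2p3:
  assumes "\<E> \<subseteq> CLR"
  shows "(\<exists>G. G \<subseteq> CRR \<and> \<E> \<in> K_G G) \<longleftrightarrow> hereditary \<E>"
proof
  assume "\<exists>G. G \<subseteq> CRR \<and> \<E> \<in> K_G G"
  then obtain G F where "\<E> = E_G G F" unfolding K_G_def by blast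
  show "hereditary \<E>"
    unfolding hereditary_def
  proof (intro allI impI)
    fix D E assume a: "D \<in> CLR \<and> E \<in> CLR \<and> D \<subseteq> E \<and> E \<in> \<E>"
    have "\<forall>f\<in>F. (f, D) \<in> R_G G"
    proof
      fix f assume "f \<in> F"
      then have "(f, E) \<in> R_G G" using a \<open>\<E> = E_G G F\<close> unfolding E_G_def by blast
      then obtain g where "g \<in> G" "\<forall>x\<in>E. f x = g x" "f \<in> CRR" unfolding R_G_def by blast
      then show "(f, D) \<in> R_G G" using a unfolding R_G_def by blast
    qed
    then show "D \<in> \<E>" using a \<open>\<E> = E_G G F\<close> unfolding E_G_def by blast
  qed
next
  assume h: "hereditary \<E>"
  define G where "G = {g \<in> CRR. {x. g x = 0} \<in> \<E>}"
  have "\<E> = E_G G {\<lambda>x. 0}"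
  proof
    show "\<E> \<subseteq> E_G G {\<lambda>x. 0}"
    proof
      fix E assume E: "E \<in> \<E>"
      then have c: "closed E" using assms unfolding CLR_def by blast
      obtain g :: "real \<Rightarrow> real" where g: "continuous_on UNIV g" "{x. g x = 0} = E"
        using zero_set_fun[OF c] by blast
      then have "g \<in> G" using E unfolding G_def CRR_def by simp
      have cr: "(\<lambda>x::real. 0::real) \<in> CRR" by (simp add: CRR_def)
      have cl: "E \<in> CLR" using c by (simp add: CLR_def)
      have "\<forall>x\<in>E. (0::real) = g x" using g(2) by auto
      then have "((\<lambda>x::real. 0::real), E) \<in> R_G G"
        using cr cl \<open>g \<in> G\<close> unfolding R_G_def by blast
      then show "E \<in> E_G G {\<lambda>x. 0}"
        using cl unfolding E_G_def by blast
    qed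
  next
    show "E_G G {\<lambda>x. 0} \<subseteq> \<E>"
    proof
      fix E assume "E \<in> E_G G {\<lambda>x. 0}"
      then have E: "E \<in> CLR" and "((\<lambda>x::real. 0::real), E) \<in> R_G G"
        unfolding E_G_def by blast+
      then obtain g where g: "g \<in> G" "\<forall>x\<in>E. 0 = g x"
        unfolding R_G_def by blast
      have Z: "{x. g x = 0} \<in> \<E>" "continuous_on UNIV g" using g unfolding G_def CRR_def by simp_all
      have "{x. g x = 0} \<in> CLR" using zero_set_closed[OF Z(2)] by (simp add: CLR_def)
      moreover have "E \<subseteq> {x. g x = 0}" using g by auto
      ultimately show "E \<in> \<E>" using h Z E unfolding hereditary_def by blast
    qed
  qed
  moreover have "G \<subseteq> CRR" unfolding G_def by blast
  moreover have "{\<lambda>x. 0} \<subseteq> CRR" unfolding CRR_def by simp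
  ultimately have "G \<subseteq> CRR \<and> \<E> \<in> K_G G" unfolding K_G_def by blast
  then show "\<exists>G. G \<subseteq> CRR \<and> \<E> \<in> K_G G" by blast
qed

end
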